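(* Let $P$ be a finite poset and $f\colon\mathcal{J}(P)\to\mathbb{R}$ a real-valued statistic such that $f\equiv^q c(q)$ for some $c(q)\in\mathbb{R}(q)$. Then for any positive integers $r,s$ and any cyclic permutation $\theta$ of $\mathbf{F}_0\cup\mathbf{F}_1$, the statistic $f\colon\mathcal{J}_{r,s}(P)\to\mathbb{R}$ is $c(r/s)$-mesic under the $q$-rowmotion operator $\rho\colon\mathcal{J}_{r,s}(P)\to\mathcal{J}_{r,s}(P)$.
   Context: $\mathcal{J}(P)$ is the set of order ideals of $P$. For $p\in P$, $I\in\mathcal{J}(P)$: $T_p^+(I)=1$ if $p$ is minimal in $P\setminus I$, else $0$; $T_p^-(I)=1$ if $p$ is maximal in $I$, else $0$; $T_p^q=T_p^+-qT_p^-$ with $q$ an indeterminate. For $f,g\colon\mathcal{J}(P)\to\mathbb{R}(q)$, $f\equiv^q g$ means $f-g=\sum_{p\in P}c_p(q)T_p^q$ for some $c_p(q)\in\mathbb{R}(q)$; an element of $\mathbb{R}(q)$ denotes the corresponding constant function. $\mathbf{F}_0,\mathbf{F}_1$ are disjoint sets of sizes $s$ and $r$; $\theta$ is a single $(r+s)$-cycle on $\mathbf{F}_0\cup\mathbf{F}_1$. $\mathcal{J}_{r,s}(P)$ is the set of labelings $L\colon P\to\mathbf{F}_0\cup\mathbf{F}_1$ with $L^{-1}(\mathbf{F}_0)$ an order ideal. $x$ is active in $L$ if it is maximal in $L^{-1}(\mathbf{F}_0)$ or minimal in $L^{-1}(\mathbf{F}_1)$; the toggle $\tau_p$ replaces $L(p)$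 by $\theta(L(p))$ if $p$ is active and otherwise does nothing; $\rho=\tau_{p_1}\circ\cdots\circ\tau_{p_n}$ for a linear extension $p_1,\dots,p_n$ of $P$. A statistic $g$ on $\mathcal{J}(P)$ is viewed on $\mathcal{J}_{r,s}(P)$ via $g(L)=g(L^{-1}(\mathbf{F}_0))$. A statistic is $c$-mesic if its average over every orbit equals $c$. *)

theory Defs
  imports Main "HOL-Computational_Algebra.Polynomial" "HOL-Computational_Algebra.Fraction_Field"
begin

text \<open>The poset P is a finite type 'a with its order. Order ideals of P.\<close>
definition order_ideals :: "('a::order) set set" where
  "order_ideals = {I. \<forall>x y. x \<le> y \<longrightarrow> y \<in> I \<longrightarrow> x \<in> I}"

text \<open>Rational functions R(q) are "real poly fract"; q is the indeterminate.\<close>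
definition qvar :: "real poly fract" where
  "qvar = Fract [:0, 1:] 1"

definition const_fract :: "real \<Rightarrow> real poly fract" where
  "const_fract a = Fract [:a:] 1"

definition Tplus :: "'a::order \<Rightarrow> 'a set \<Rightarrow> real poly fract" where
  "Tplus p I = (if p \<notin> I \<and> (\<forall>y. y < p \<longrightarrow> y \<in> I) then 1 else 0)"

definition Tminus :: "'a::order \<Rightarrow> 'a set \<Rightarrow> real poly fract" where
  "Tminus p I = (if p \<in> I \<and> (\<forall>y. p < y \<longrightarrow> y \<notin> I) then 1 else 0)"

definition Tq :: "'a::order \<Rightarrow> 'a set \<Rightarrow> real poly fract" where
  "Tq p I = Tplus p I - qvar * Tminus p I"

definition q_equiv :: "('a::{finite,order} set \<Rightarrow> real poly fract) \<Rightarrow> ('a set \<Rightarrow> real poly fract) \<Rightarrow> bool" where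
  "q_equiv f g \<longleftrightarrow> (\<exists>cp :: 'a \<Rightarrow> real poly fract.
      \<forall>I \<in> order_ideals. f I - g I = (\<Sum>p\<in>UNIV. cp p * Tq p I))"

definition fract_defined_at :: "real poly fract \<Rightarrow> real \<Rightarrow> bool" where
  "fract_defined_at c x \<longleftrightarrow> (\<exists>a b. c = Fract a b \<and> poly b x \<noteq> 0)"

definition fract_eval :: "real poly fract \<Rightarrow> real \<Rightarrow> real" where
  "fract_eval c x = (THE v. \<exists>a b. c = Fract a b \<and> poly b x \<noteq> 0 \<and> v = poly a x / poly b x)"

definition single_cycle_on :: "('b \<Rightarrow> 'b) \<Rightarrow> 'b set \<Rightarrow> bool" where
  "single_cycle_on \<theta> S \<longleftrightarrow> bij_betw \<theta> S S \<and> (\<forall>x. x \<notin> S \<longrightarrow> \<theta> x = x) \<and>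
     (\<forall>x\<in>S. \<forall>y\<in>S. \<exists>n. (\<theta> ^^ n) x = y)"

definition labelings :: "'b set \<Rightarrow> 'b set \<Rightarrow> ('a::order \<Rightarrow> 'b) set" where
  "labelings F0 F1 = {L. (\<forall>x. L x \<in> F0 \<union> F1) \<and> L -` F0 \<in> order_ideals}"

definition active :: "'b set \<Rightarrow> 'b set \<Rightarrow> ('a::order \<Rightarrow> 'b) \<Rightarrow> 'a \<Rightarrow> bool" where
  "active F0 F1 L x \<longleftrightarrow>
     (L x \<in> F0 \<and> (\<forall>y. x < y \<longrightarrow> L y \<notin> F0)) \<or>
     (L x \<in> F1 \<and> (\<forall>y. y < x \<longrightarrow> L y \<notin> F1))"

definition toggle :: "'b set \<Rightarrow> 'b set \<Rightarrow> ('b \<Rightarrow> 'b) \<Rightarrow> 'a::order \<Rightarrow> ('a \<Rightarrow> 'b) \<Rightarrow> ('a \<Rightarrow> 'b)" where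
  "toggle F0 F1 \<theta> p L = (if active F0 F1 L p then L(p := \<theta> (L p)) else L)"

definition linear_extension :: "'a::{finite,order} list \<Rightarrow> bool" where
  "linear_extension ps \<longleftrightarrow> distinct ps \<and> set ps = UNIV \<and>
     (\<forall>i j. i < length ps \<longrightarrow> j < length ps \<longrightarrow> ps ! i < ps ! j \<longrightarrow> i < j)"

definition qrowmotion :: "'b set \<Rightarrow> 'b set \<Rightarrow> ('b \<Rightarrow> 'b) \<Rightarrow> 'a::order list \<Rightarrow> ('a \<Rightarrow> 'b) \<Rightarrow> ('a \<Rightarrow> 'b)" where
  "qrowmotion F0 F1 \<theta> ps = foldr (\<lambda>p g. toggle F0 F1 \<theta> p \<circ> g) ps id"

definition orbit_of :: "('c \<Rightarrow> 'c) \<Rightarrow> 'c \<Rightarrow> 'c set" where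
  "orbit_of \<rho> x = {(\<rho> ^^ n) x | n. True}"

definition mesic :: "('c \<Rightarrow> 'c) \<Rightarrow> 'c set \<Rightarrow> ('c \<Rightarrow> real) \<Rightarrow> real \<Rightarrow> bool" where
  "mesic \<rho> X g c \<longleftrightarrow> (\<forall>x\<in>X. (\<Sum>y\<in>orbit_of \<rho> x. g y) / real (card (orbit_of \<rho> x)) = c)"

end

theory Submission
  imports Defs "HOL-Library.FuncSet"
begin


definition tp :: "'a::order \<Rightarrow> 'a set \<Rightarrow> real" where
  "tp p I = (if p \<notin> I \<and> (\<forall>y. y < p \<longrightarrow> y \<in> I) then 1 else 0)"
definition tm :: "'a::order \<Rightarrow> 'a set \<Rightarrow> real" where
  "tm p I = (if p \<in> I \<and> (\<forall>y. p < y \<longrightarrow> y \<notin> I) then 1 else 0)"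
definition qp :: "'a::order \<Rightarrow> 'a set \<Rightarrow> real poly" where
  "qp p I = [: tp p I, - tm p I :]"

lemma poly_qp: "poly (qp p I) x = tp p I - x * tm p I"
  by (simp add: qp_def)

definition iota :: "real poly \<Rightarrow> real poly fract" where "iota x = Fract x 1"

lemma iota_add: "iota (x + y) = iota x + iota y" by (simp add: iota_def)
lemma iota_diff: "iota (x - y) = iota x - iota y" by (simp add: iota_def)
lemma iota_mult: "iota (x * y) = iota x * iota y" by (simp add: iota_def)
lemma iota_sum: "iota (sum f A) = (\<Sum>a\<in>A. iota (f a))"
  by (induction A rule: infinite_finite_induct) (simp_all add: iota_add, simp_all add: iota_def fract_collapse pCons_one)
lemma iota_inj: "iota x = iota y \<Longrightarrow> x = y" by (simp add: iota_def eq_fract)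

lemma Tq_qp: "Tq p I = iota (qp p I)"
proof -
  have a: "Tplus p I = iota [:tp p I:]"
    by (simp add: Tplus_def tp_def iota_def fract_collapse pCons_one)
  have b: "Tminus p I = iota [:tm p I:]"
    by (simp add: Tminus_def tm_def iota_def fract_collapse pCons_one)
  have c: "qvar = iota [:0,1:]" by (simp add: qvar_def iota_def)
  have "[:tp p I:] - [:0,1:] * [:tm p I:] = qp p I"
    by (simp add: qp_def)
  then show ?thesis unfolding Tq_def a b c iota_mult[symmetric] iota_diff[symmetric] by simp
qed

lemma indep_nonneg:
  fixes a :: "'a::{finite,order} \<Rightarrow> real"
  assumes q0: "q0 > 0"
    and h: "\<forall>I\<in>order_ideals. (\<Sum>p\<in>UNIV. a p * (tp p I - q0 * tm p I)) = 0"
  shows "a x \<ge> 0"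
proof (rule ccontr)
  assume "\<not> a x \<ge> 0"
  define N where "N = {x. a x < 0}"
  have Nne: "N \<noteq> {}" using \<open>\<not> a x \<ge> 0\<close> by (auto simp: N_def not_le)
  obtain m where mN: "m \<in> N" and mmax: "\<forall>b\<in>N. m \<le> b \<longrightarrow> m = b"
    using finite_has_maximal[OF finite Nne] by blast
  define I where "I = {y. \<exists>x\<in>N. y \<le> x}"
  have II: "I \<in> order_ideals" by (auto simp: order_ideals_def I_def intro: order_trans)
  have s1: "(\<Sum>p\<in>UNIV. a p * tp p I) \<ge> 0"
  proof (rule sum_nonneg)
    fix p assume "p \<in> (UNIV::'a set)"
    show "a p * tp p I \<ge> 0"
    proof (cases "p \<in> I")
      case True then show ?thesis by (simp add: tp_def)
    next
      case False
      then have "p \<notin> N" by (auto simp: I_def)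
      then show ?thesis by (simp add: tp_def N_def)
    qed
  qed
  have tmle: "a p * tm p I \<le> 0" for p
  proof (cases "tm p I = 1")
    case True
    then have pI: "p \<in> I" and up: "\<forall>y. p < y \<longrightarrow> y \<notin> I" by (auto simp: tm_def split: if_splits)
    then obtain z where "z \<in> N" "p \<le> z" by (auto simp: I_def)
    then have "p = z" using up by (force simp: I_def order.order_iff_strict)
    then show ?thesis using True \<open>z \<in> N\<close> by (simp add: N_def)
  next
    case False then have "tm p I = 0" by (simp add: tm_def split: if_splits)
    then show ?thesis by simp
  qed
  have tmm: "tm m I = 1"
  proof -
    have "m \<in> I" using mN by (auto simp: I_def)
    moreover have "\<forall>y. m < y \<longrightarrow> y \<notin> I"
    proof (intro allI impI)
      fix y assume "m < y"
      show "y \<notin> I"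
      proof
        assume "y \<in> I"
        then obtain z where "z \<in> N" "y \<le> z" by (auto simp: I_def)
        then have "m \<le> z" "m \<noteq> z" using \<open>m < y\<close> by auto
        then show False using mmax \<open>z \<in> N\<close> by blast
      qed
    qed
    ultimately show ?thesis by (simp add: tm_def)
  qed
  have s2: "(\<Sum>p\<in>UNIV. a p * tm p I) < 0"
  proof -
    have "(\<Sum>p\<in>UNIV. a p * tm p I) = a m * tm m I + (\<Sum>p\<in>UNIV-{m}. a p * tm p I)"
      by (simp add: sum.remove)
    also have "(\<Sum>p\<in>UNIV-{m}. a p * tm p I) \<le> 0" by (rule sum_nonpos) (simp add: tmle)
    moreover have "a m * tm m I < 0" using tmm mN by (simp add: N_def)
    ultimately show ?thesis by linarith
  qed
  have "(\<Sum>p\<in>UNIV. a p * (tp p I - q0 * tm p I))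
        = (\<Sum>p\<in>UNIV. a p * tp p I) - q0 * (\<Sum>p\<in>UNIV. a p * tm p I)"
    by (simp add: algebra_simps sum_subtractf sum_distrib_left)
  moreover have "q0 * (\<Sum>p\<in>UNIV. a p * tm p I) < 0" using q0 s2 by (simp add: mult_pos_neg)
  ultimately have "(\<Sum>p\<in>UNIV. a p * (tp p I - q0 * tm p I)) > 0" using s1 by linarith
  then show False using h II by auto
qed

lemma indep:
  fixes a :: "'a::{finite,order} \<Rightarrow> real"
  assumes q0: "q0 > 0"
    and h: "\<forall>I\<in>order_ideals. (\<Sum>p\<in>UNIV. a p * (tp p I - q0 * tm p I)) = 0"
  shows "a x = 0"
proof -
  have "a x \<ge> 0" by (rule indep_nonneg[OF q0 h])
  moreover have "(\<lambda>p. - a p) x \<ge> 0"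
  proof (rule indep_nonneg[OF q0])
    show "\<forall>I\<in>order_ideals. (\<Sum>p\<in>UNIV. - a p * (tp p I - q0 * tm p I)) = 0"
      using h by (simp add: sum_negf)
  qed
  ultimately show ?thesis by simp
qed


lemma reduce:
  fixes G :: "'a::{finite,order} set \<Rightarrow> real poly" and U :: "'a \<Rightarrow> real poly"
  assumes q0: "q0 > 0" and "D \<noteq> 0"
    and "\<forall>I\<in>order_ideals. D * G I = (\<Sum>p\<in>UNIV. U p * qp p I)"
  shows "\<exists>D' U'. poly D' q0 \<noteq> 0 \<and> (\<forall>I\<in>order_ideals. D' * G I = (\<Sum>p\<in>UNIV. U' p * qp p I))"
  using assms(2,3)
proof (induction "degree D" arbitrary: D U rule: less_induct)
  case less
  show ?case
  proof (cases "poly D q0 = 0")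
    case False then show ?thesis using less.prems by blast
  next
    case True
    have ev: "\<forall>I\<in>order_ideals. (\<Sum>p\<in>UNIV. poly (U p) q0 * (tp p I - q0 * tm p I)) = 0"
    proof
      fix I :: "'a set" assume "I \<in> order_ideals"
      then have "poly (D * G I) q0 = poly (\<Sum>p\<in>UNIV. U p * qp p I) q0" using less.prems by simp
      then show "(\<Sum>p\<in>UNIV. poly (U p) q0 * (tp p I - q0 * tm p I)) = 0"
        using True by (simp add: poly_sum poly_qp)
    qed
    have U0: "poly (U p) q0 = 0" for p using indep[OF q0 ev] .
    have "\<forall>p. \<exists>V. U p = [:-q0,1:] * V" using U0 by (simp add: poly_eq_0_iff_dvd dvd_def)
    then obtain V where V: "\<forall>p. U p = [:-q0,1:] * V p" by metis
    obtain D1 where D1: "D = [:-q0,1:] * D1" using True by (auto simp: poly_eq_0_iff_dvd dvd_def)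
    have "D1 \<noteq> 0" using D1 less.prems(1) by auto
    have "degree D1 < degree D" unfolding D1 using \<open>D1\<noteq>0\<close> by (subst degree_mult_eq) auto
    have "\<forall>I\<in>order_ideals. D1 * G I = (\<Sum>p\<in>UNIV. V p * qp p I)"
    proof
      fix I :: "'a set" assume "I \<in> order_ideals"
      have "[:-q0,1:] * (D1 * G I) = D * G I" using D1 by (simp only: mult.assoc)
      also have "\<dots> = (\<Sum>p\<in>UNIV. U p * qp p I)" using less.prems(2) \<open>I \<in> order_ideals\<close> by blast
      also have "\<dots> = (\<Sum>p\<in>UNIV. [:-q0,1:] * (V p * qp p I))" using V by (simp only: mult.assoc)
      also have "\<dots> = [:-q0,1:] * (\<Sum>p\<in>UNIV. V p * qp p I)" by (simp only: sum_distrib_left)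
      finally have eq: "[:-q0,1:] * (D1 * G I) = [:-q0,1:] * (\<Sum>p\<in>UNIV. V p * qp p I)" .
      have nz: "[:-q0,1:] \<noteq> (0::real poly)" by simp
      show "D1 * G I = (\<Sum>p\<in>UNIV. V p * qp p I)" using mult_left_cancel[OF nz] eq by blast
    qed
    then show ?thesis using less.hyps[OF \<open>degree D1 < degree D\<close> \<open>D1 \<noteq> 0\<close>] by blast
  qed
qed

lemma to_poly:
  fixes f :: "'a::{finite,order} set \<Rightarrow> real"
  assumes "q_equiv (\<lambda>I. const_fract (f I)) (\<lambda>_. c)" and cab: "c = Fract \<alpha> \<beta>" and "\<beta> \<noteq> 0"
  shows "\<exists>D U. D \<noteq> 0 \<and> (\<forall>I\<in>order_ideals. D * (\<beta> * [:f I:] - \<alpha>) = (\<Sum>p\<in>UNIV. U p * qp p I))"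
proof -
  obtain cp :: "'a \<Rightarrow> real poly fract" where h: "\<forall>I\<in>order_ideals. const_fract (f I) - c = (\<Sum>p\<in>UNIV. cp p * Tq p I)"
    using assms(1) by (auto simp: q_equiv_def)
  have "\<forall>p. \<exists>u d. cp p = Fract u d \<and> d \<noteq> 0" by (metis Fract_cases)
  then obtain u d where ud: "\<forall>p. cp p = Fract (u p) (d p) \<and> d p \<noteq> 0" by metis
  define E where "E p = (\<Prod>x\<in>UNIV-{p}. d x)" for p
  define U where "U p = \<beta> * (u p * E p)" for p
  define D where "D = (\<Prod>x\<in>UNIV. d x)"
  have Dne: "D \<noteq> 0" using ud assms(3) by (simp add: D_def)
  have cpE: "iota (\<Prod>x\<in>UNIV. d x) * cp p = iota (u p * E p)" for p
  proof -
    have "(\<Prod>x\<in>UNIV. d x) = d p * E p" unfolding E_def by (rule prod.remove) simp_all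
    then have "iota (\<Prod>x\<in>UNIV. d x) * cp p = Fract (d p * (E p * u p)) (d p * 1)"
      using ud by (simp add: iota_def eq_fract ac_simps)
    also have "\<dots> = iota (u p * E p)" using ud mult_fract_cancel[of "d p" "E p * u p" 1] by (simp add: iota_def mult.commute)
    finally show ?thesis .
  qed
  have cb: "iota \<beta> * c = iota \<alpha>"
    using cab assms(3) by (simp add: iota_def eq_fract)
  have "D * (\<beta> * [:f I:] - \<alpha>) = (\<Sum>p\<in>UNIV. U p * qp p I)" if "I \<in> order_ideals" for I
  proof (rule iota_inj)
    have "iota (D * (\<beta> * [:f I:] - \<alpha>)) = iota (\<Prod>x\<in>UNIV. d x) * (iota \<beta> * (const_fract (f I) - c))"
    proof -
      have ee: "iota \<beta> * (const_fract (f I) - c) = iota (\<beta> * [:f I:] - \<alpha>)"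
      proof -
        have e1: "const_fract (f I) = iota [:f I:]" by (simp add: const_fract_def iota_def)
        show ?thesis by (simp only: e1 right_diff_distrib iota_diff iota_mult cb)
      qed
      show ?thesis by (simp only: D_def iota_mult ee)
    qed
    also have "\<dots> = iota (\<Prod>x\<in>UNIV. d x) * (iota \<beta> * (\<Sum>p\<in>UNIV. cp p * Tq p I))"
      using h that by simp
    also have "\<dots> = (\<Sum>p\<in>UNIV. iota \<beta> * (iota (\<Prod>x\<in>UNIV. d x) * cp p) * Tq p I)"
      unfolding sum_distrib_left by (rule sum.cong) (simp_all add: mult_ac)
    also have "\<dots> = iota (\<Sum>p\<in>UNIV. U p * qp p I)"
      unfolding iota_sum
    proof (rule sum.cong)
      fix p :: 'a
      have "iota \<beta> * (iota (\<Prod>x\<in>UNIV. d x) * cp p) * Tq p I = iota \<beta> * iota (u p * E p) * iota (qp p I)"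
        by (simp only: cpE Tq_qp)
      also have "\<dots> = iota (U p * qp p I)" by (simp only: U_def iota_mult)
      finally show "iota \<beta> * (iota (\<Prod>x\<in>UNIV. d x) * cp p) * Tq p I = iota (U p * qp p I)" .
    qed simp
    finally show "iota (D * (\<beta> * [:f I:] - \<alpha>)) = iota (\<Sum>p\<in>UNIV. U p * qp p I)" .
  qed
  then show ?thesis apply (intro exI[of _ D] exI[of _ U]) using Dne by simp
qed

lemma fract_eval_eq:
  assumes "c = Fract a b" "poly b x \<noteq> 0"
  shows "fract_eval c x = poly a x / poly b x"
  unfolding fract_eval_def
proof (rule the_equality)
  show "\<exists>a' b'. c = Fract a' b' \<and> poly b' x \<noteq> 0 \<and> poly a x / poly b x = poly a' x / poly b' x"
    apply (rule exI[of _ a], rule exI[of _ b])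
    using assms by simp
next
  fix v assume "\<exists>a' b'. c = Fract a' b' \<and> poly b' x \<noteq> 0 \<and> v = poly a' x / poly b' x"
  then obtain a' b' where h: "c = Fract a' b'" "poly b' x \<noteq> 0" "v = poly a' x / poly b' x" by blast
  have "b \<noteq> 0" "b' \<noteq> 0" using assms h by auto
  then have "a * b' = a' * b" using assms h by (simp add: eq_fract)
  then have "poly (a * b') x = poly (a' * b) x" by (simp only:)
  then have e: "poly a x * poly b' x = poly a' x * poly b x" by (simp only: poly_mult)
  have "poly a' x / poly b' x = poly a x / poly b x"
    by (simp only: frac_eq_eq[OF h(2) assms(2)] e[symmetric])
  then show "v = poly a x / poly b x" using h(3) by (simp only:)
qed



lemma toggle_other: "x \<noteq> p \<Longrightarrow> toggle F0 F1 \<theta> p L x = L x"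
  by (simp add: toggle_def)

lemma labD: "L \<in> labelings F0 F1 \<Longrightarrow> L x \<in> F0 \<union> F1"
  by (simp add: labelings_def)

lemma lab_ideal: "L \<in> labelings F0 F1 \<Longrightarrow> x \<le> y \<Longrightarrow> L y \<in> F0 \<Longrightarrow> L x \<in> F0"
  by (auto simp: labelings_def order_ideals_def)

lemma toggle_lab:
  assumes L: "L \<in> labelings F0 F1" and disj: "F0 \<inter> F1 = {}"
    and th: "\<theta> ` (F0 \<union> F1) \<subseteq> F0 \<union> F1"
  shows "toggle F0 F1 \<theta> p L \<in> labelings F0 F1"
proof (cases "active F0 F1 L p")
  case False then show ?thesis using L by (simp add: toggle_def)
next
  case True
  let ?L' = "L(p := \<theta> (L p))"
  have vals: "\<forall>x. ?L' x \<in> F0 \<union> F1" using L th by (auto simp: labelings_def)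
  have ideal: "?L' -` F0 \<in> order_ideals"
    unfolding order_ideals_def mem_Collect_eq
  proof (intro allI impI)
    fix x y assume xy: "x \<le> y" and yin: "y \<in> ?L' -` F0"
    show "x \<in> ?L' -` F0"
    proof (cases "x = p")
      case xp: True
      show ?thesis
      proof (cases "y = p")
        case True then show ?thesis using xp yin by simp
      next
        case False
        then have py: "p < y" "L y \<in> F0" using xp xy yin by auto
        then have "L p \<in> F0" using lab_ideal[OF L] by (meson less_imp_le)
        then show ?thesis using \<open>active F0 F1 L p\<close> py disj by (auto simp: active_def)
      qed
    next
      case xnp: False
      show ?thesis
      proof (cases "y = p")
        case yp: True
        then have "x < p" using xnp xy by auto
        show ?thesis
        proof (cases "L p \<in> F0")
          case True then show ?thesis using lab_ideal[OF L] xy yp xnp by auto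
        next
          case False
          then have "L p \<in> F1" using labD[OF L] by auto
          then have "L x \<notin> F1" using \<open>active F0 F1 L p\<close> False \<open>x<p\<close> by (auto simp: active_def)
          then show ?thesis using labD[OF L, of x] xnp by auto
        qed
      next
        case False then show ?thesis using xnp yin xy lab_ideal[OF L] by auto
      qed
    qed
  qed
  show ?thesis using True vals ideal by (simp add: toggle_def labelings_def)
qed

lemma toggle_active:
  assumes L: "L \<in> labelings F0 F1" and disj: "F0 \<inter> F1 = {}"
    and th: "\<theta> ` (F0 \<union> F1) \<subseteq> F0 \<union> F1" and act: "active F0 F1 L p"
  shows "active F0 F1 (toggle F0 F1 \<theta> p L) p"
proof -
  have t: "toggle F0 F1 \<theta> p L = L(p := \<theta> (L p))" using act by (simp add: toggle_def)
  have tS: "\<theta> (L p) \<in> F0 \<union> F1" using th labD[OF L] by auto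
  show ?thesis
  proof (cases "L p \<in> F0")
    case True
    then have up: "\<forall>y. p < y \<longrightarrow> L y \<notin> F0" using act disj by (auto simp: active_def)
    have low: "\<forall>y. y < p \<longrightarrow> L y \<notin> F1" using True lab_ideal[OF L] disj by (auto dest: less_imp_le)
    show ?thesis using tS up low unfolding t active_def by auto
  next
    case False
    then have LF1: "L p \<in> F1" using labD[OF L] by auto
    then have low: "\<forall>y. y < p \<longrightarrow> L y \<notin> F1" using act disj by (auto simp: active_def)
    have up: "\<forall>y. p < y \<longrightarrow> L y \<notin> F0" using False lab_ideal[OF L] by (auto dest: less_imp_le)
    show ?thesis using tS up low unfolding t active_def by auto
  qed
qed

lemma toggle_inj:
  assumes disj: "F0 \<inter> F1 = {}" and th: "\<theta> ` (F0 \<union> F1) \<subseteq> F0 \<union> F1"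
    and thi: "inj_on \<theta> (F0 \<union> F1)"
  shows "inj_on (toggle F0 F1 \<theta> p) (labelings F0 F1)"
proof (rule inj_onI)
  fix L1 L2 assume L1: "L1 \<in> labelings F0 F1" and L2: "L2 \<in> labelings F0 F1"
    and eq: "toggle F0 F1 \<theta> p L1 = toggle F0 F1 \<theta> p L2"
  show "L1 = L2"
  proof (cases "active F0 F1 L1 p")
    case a1: True
    show ?thesis
    proof (cases "active F0 F1 L2 p")
      case a2: True
      have e: "L1(p := \<theta> (L1 p)) = L2(p := \<theta> (L2 p))" using eq a1 a2 by (simp add: toggle_def)
      have off: "L1 x = L2 x" if "x \<noteq> p" for x
        using fun_cong[OF e, of x] that by simp
      have "\<theta> (L1 p) = \<theta> (L2 p)" using fun_cong[OF e, of p] by simp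
      then have "L1 p = L2 p" using thi labD[OF L1] labD[OF L2] by (meson inj_onD)
      then show ?thesis using off by (metis ext)
    next
      case a2: False
      have "active F0 F1 (toggle F0 F1 \<theta> p L1) p" by (rule toggle_active[OF L1 disj th a1])
      then have "active F0 F1 L2 p" using eq a2 by (simp add: toggle_def)
      then show ?thesis using a2 by simp
    qed
  next
    case a1: False
    show ?thesis
    proof (cases "active F0 F1 L2 p")
      case a2: True
      have "active F0 F1 (toggle F0 F1 \<theta> p L2) p" by (rule toggle_active[OF L2 disj th a2])
      then have "active F0 F1 L1 p" using eq a1 by (simp add: toggle_def)
      then show ?thesis using a1 by simp
    next
      case a2: False
      then show ?thesis using eq a1 by (simp add: toggle_def)
    qed
  qed
qed

lemma qrow_Nil: "qrowmotion F0 F1 \<theta> [] = id" by (simp add: qrowmotion_def)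
lemma qrow_Cons: "qrowmotion F0 F1 \<theta> (p # ps) = toggle F0 F1 \<theta> p \<circ> qrowmotion F0 F1 \<theta> ps"
  by (simp add: qrowmotion_def)

lemma foldr_comp: "foldr (\<lambda>p g. t p \<circ> g) xs g = foldr (\<lambda>p g. t p \<circ> g) xs id \<circ> g"
  by (induction xs) auto

lemma qrow_append: "qrowmotion F0 F1 \<theta> (xs @ ys) = qrowmotion F0 F1 \<theta> xs \<circ> qrowmotion F0 F1 \<theta> ys"
  unfolding qrowmotion_def foldr_append by (rule foldr_comp)

lemma qrow_lab:
  assumes disj: "F0 \<inter> F1 = {}" and th: "\<theta> ` (F0 \<union> F1) \<subseteq> F0 \<union> F1"
  shows "L \<in> labelings F0 F1 \<Longrightarrow> qrowmotion F0 F1 \<theta> zs L \<in> labelings F0 F1"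
  by (induction zs) (simp_all add: qrow_Nil qrow_Cons toggle_lab[OF _ disj th])

lemma qrow_inj:
  assumes disj: "F0 \<inter> F1 = {}" and th: "\<theta> ` (F0 \<union> F1) \<subseteq> F0 \<union> F1"
    and thi: "inj_on \<theta> (F0 \<union> F1)"
  shows "inj_on (qrowmotion F0 F1 \<theta> zs) (labelings F0 F1)"
proof (induction zs)
  case Nil then show ?case by (simp add: qrow_Nil)
next
  case (Cons z zs)
  have "qrowmotion F0 F1 \<theta> zs ` labelings F0 F1 \<subseteq> labelings F0 F1"
    using qrow_lab[OF disj th] by auto
  then have "inj_on (toggle F0 F1 \<theta> z) (qrowmotion F0 F1 \<theta> zs ` labelings F0 F1)"
    using toggle_inj[OF disj th thi] inj_on_subset by blast
  then show ?case unfolding qrow_Cons using Cons comp_inj_on by blast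
qed

lemma qrow_other: "x \<notin> set zs \<Longrightarrow> qrowmotion F0 F1 \<theta> zs L x = L x"
  by (induction zs) (simp_all add: qrow_Nil qrow_Cons toggle_other)



lemma funpow_in: "x \<in> X \<Longrightarrow> \<forall>y\<in>X. h y \<in> X \<Longrightarrow> (h ^^ k) x \<in> X"
  by (induction k) auto

lemma funpow_inj_on: "\<forall>y\<in>X. h y \<in> X \<Longrightarrow> inj_on h X \<Longrightarrow> inj_on (h ^^ k) X"
proof (induction k)
  case 0 then show ?case by simp
next
  case (Suc k)
  have "(h ^^ k) ` X \<subseteq> X" using Suc.prems funpow_in[of _ X h k] by auto
  then have "inj_on h ((h ^^ k) ` X)" using Suc.prems inj_on_subset by blast
  then show ?case using Suc comp_inj_on by (metis funpow.simps(2))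
qed

lemma periodic:
  assumes fin: "finite X" and maps: "\<forall>y\<in>X. h y \<in> X" and inj: "inj_on h X" and x: "x \<in> X"
  shows "\<exists>N>0. (h ^^ N) x = x \<and> bij_betw (\<lambda>k. (h ^^ k) x) {..<N} (orbit_of h x)"
proof -
  have inX: "(h ^^ k) x \<in> X" for k using funpow_in[OF x maps] .
  have cancel: "(h ^^ (j - i)) x = x" if "i < j" "(h ^^ i) x = (h ^^ j) x" for i j
  proof -
    have "(h ^^ i) ((h ^^ (j - i)) x) = (h ^^ j) x"
      using that(1) by (metis funpow_add le_add_diff_inverse less_imp_le o_apply)
    then have "(h ^^ i) ((h ^^ (j - i)) x) = (h ^^ i) x" using that(2) by simp
    then show ?thesis using funpow_inj_on[OF maps inj, of i] inX x by (meson inj_onD)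
  qed
  have ex: "\<exists>n. 0 < n \<and> (h ^^ n) x = x"
  proof -
    have "\<not> inj_on (\<lambda>k. (h ^^ k) x) {..card X}"
    proof
      assume "inj_on (\<lambda>k. (h ^^ k) x) {..card X}"
      then have "card ((\<lambda>k. (h ^^ k) x) ` {..card X}) = card {..card X}" by (rule card_image)
      moreover have "card ((\<lambda>k. (h ^^ k) x) ` {..card X}) \<le> card X"
        using inX fin by (intro card_mono) auto
      ultimately show False by simp
    qed
    then obtain i j where ij: "i \<noteq> j" "(h ^^ i) x = (h ^^ j) x" unfolding inj_on_def by blast
    show ?thesis
    proof (cases "i < j")
      case True then show ?thesis using cancel[OF True ij(2)] by (intro exI[of _ "j - i"]) simp
    next
      case False then have "j < i" using ij by simp
      then show ?thesis using cancel[OF \<open>j < i\<close> ij(2)[symmetric]] by (intro exI[of _ "i - j"]) simp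
    qed
  qed
  define N where "N = (LEAST n. 0 < n \<and> (h ^^ n) x = x)"
  have N: "0 < N" "(h ^^ N) x = x" using LeastI_ex[OF ex] unfolding N_def by auto
  have Nmin: "\<not> ((h ^^ n) x = x)" if "0 < n" "n < N" for n
    using not_less_Least[of n "\<lambda>n. 0 < n \<and> (h ^^ n) x = x"] that unfolding N_def by auto
  have multN: "(h ^^ (q * N + m)) x = (h ^^ m) x" for q m
  proof (induction q)
    case 0 then show ?case by simp
  next
    case (Suc q)
    have e: "Suc q * N + m = (q * N + m) + N" by simp
    have "(h ^^ (Suc q * N + m)) x = (h ^^ (q * N + m)) ((h ^^ N) x)"
      unfolding e by (simp only: funpow_add o_apply)
    then show ?case using N(2) Suc by simp
  qed
  have modN: "(h ^^ n) x = (h ^^ (n mod N)) x" for n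
    using multN[of "n div N" "n mod N"] by simp
  have injN: "inj_on (\<lambda>k. (h ^^ k) x) {..<N}"
  proof (rule inj_onI)
    fix i j assume "i \<in> {..<N}" "j \<in> {..<N}" "(h ^^ i) x = (h ^^ j) x"
    then show "i = j"
      using cancel Nmin by (metis diff_less_mono lessThan_iff linorder_neqE_nat zero_less_diff diff_le_self le_less_trans)
  qed
  have img: "(\<lambda>k. (h ^^ k) x) ` {..<N} = orbit_of h x"
  proof
    show "(\<lambda>k. (h ^^ k) x) ` {..<N} \<subseteq> orbit_of h x" by (auto simp: orbit_of_def)
    show "orbit_of h x \<subseteq> (\<lambda>k. (h ^^ k) x) ` {..<N}"
    proof
      fix y assume "y \<in> orbit_of h x"
      then obtain n where "y = (h ^^ n) x" by (auto simp: orbit_of_def)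
      then have "y = (h ^^ (n mod N)) x" using modN by simp
      moreover have "n mod N < N" using N(1) by simp
      ultimately show "y \<in> (\<lambda>k. (h ^^ k) x) ` {..<N}" by blast
    qed
  qed
  show ?thesis using N injN img by (auto simp: bij_betw_def)
qed

lemma potential:
  fixes g :: "'b \<Rightarrow> real"
  assumes fin: "finite S" and bij: "bij_betw \<theta> S S"
    and cyc: "\<forall>x\<in>S. \<forall>y\<in>S. \<exists>n. (\<theta> ^^ n) x = y" and sum0: "(\<Sum>y\<in>S. g y) = 0"
  shows "\<exists>\<phi>::'b \<Rightarrow> real. \<forall>y\<in>S. \<phi> (\<theta> y) - \<phi> y = g y"
proof (cases "S = {}")
  case True then show ?thesis by simp
next
  case False
  then obtain z where z: "z \<in> S" by blast
  have maps: "\<forall>y\<in>S. \<theta> y \<in> S" using bij by (auto simp: bij_betw_def)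
  have inj: "inj_on \<theta> S" using bij by (simp add: bij_betw_def)
  obtain N where N: "0 < N" "(\<theta> ^^ N) z = z" and bN: "bij_betw (\<lambda>k. (\<theta> ^^ k) z) {..<N} (orbit_of \<theta> z)"
    using periodic[OF fin maps inj z] by blast
  have orb: "orbit_of \<theta> z = S"
  proof
    show "orbit_of \<theta> z \<subseteq> S" using funpow_in[OF z maps] by (auto simp: orbit_of_def)
    show "S \<subseteq> orbit_of \<theta> z"
    proof
      fix y assume "y \<in> S"
      then obtain n where "(\<theta> ^^ n) z = y" using cyc z by blast
      then show "y \<in> orbit_of \<theta> z" by (auto simp: orbit_of_def)
    qed
  qed
  have bS: "bij_betw (\<lambda>k. (\<theta> ^^ k) z) {..<N} S" using bN orb by simp
  define j where "j = the_inv_into {..<N} (\<lambda>k. (\<theta> ^^ k) z)"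
  have jk: "j ((\<theta> ^^ k) z) = k" if "k < N" for k
    using that bS the_inv_into_f_f[of "\<lambda>k. (\<theta> ^^ k) z" "{..<N}" k] unfolding j_def
    by (auto simp: bij_betw_def)
  have jN: "j y < N" and jy: "(\<theta> ^^ j y) z = y" if yS: "y \<in> S" for y
  proof -
    have "y \<in> (\<lambda>k. (\<theta> ^^ k) z) ` {..<N}" using yS bS by (simp add: bij_betw_def)
    then obtain k where "k < N" "y = (\<theta> ^^ k) z" by auto
    then show "j y < N" "(\<theta> ^^ j y) z = y" using jk by auto
  qed
  define \<phi> where "\<phi> y = (\<Sum>i<j y. g ((\<theta> ^^ i) z))" for y
  have tot: "(\<Sum>i<N. g ((\<theta> ^^ i) z)) = 0"
    using sum.reindex_bij_betw[OF bS, of g] sum0 by simp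
  show ?thesis
  proof (intro exI ballI)
    fix y assume y: "y \<in> S"
    define k where "k = j y"
    have k: "k < N" "(\<theta> ^^ k) z = y" using jN[OF y] jy[OF y] by (auto simp: k_def)
    show "\<phi> (\<theta> y) - \<phi> y = g y"
    proof (cases "Suc k < N")
      case True
      have "\<theta> y = (\<theta> ^^ Suc k) z" using k by simp
      then have "j (\<theta> y) = Suc k" using jk[OF True] by simp
      then have "\<phi> (\<theta> y) = \<phi> y + g y" using k by (simp add: \<phi>_def k_def)
      then show ?thesis by simp
    next
      case False
      then have Nk: "N = Suc k" using k by simp
      have "\<theta> y = z" using k N Nk by (metis funpow.simps(2) o_apply)
      then have "j (\<theta> y) = 0" using jk[of 0] N by simp
      then have "\<phi> (\<theta> y) = 0" by (simp add: \<phi>_def)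
      moreover have "\<phi> y + g y = 0" using tot Nk k by (simp add: \<phi>_def k_def)
      ultimately show ?thesis by simp
    qed
  qed
qed



lemma count:
  fixes ps :: "'a::{finite,order} list" and L :: "'a \<Rightarrow> 'b"
  assumes disj: "F0 \<inter> F1 = {}" and finF0: "finite F0" and finF1: "finite F1"
    and cF0: "card F0 = s" and cF1: "card F1 = r"
    and cyc: "single_cycle_on \<theta> (F0 \<union> F1)" and lin: "linear_extension ps"
    and L: "L \<in> labelings F0 F1" and per: "(qrowmotion F0 F1 \<theta> ps ^^ N) L = L"
  shows "(\<Sum>k<N. real s * tp p ((qrowmotion F0 F1 \<theta> ps ^^ k) L -` F0))
       = (\<Sum>k<N. real r * tm p ((qrowmotion F0 F1 \<theta> ps ^^ k) L -` F0))"
proof -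
  define S where "S = F0 \<union> F1"
  define \<rho> where "\<rho> = qrowmotion F0 F1 \<theta> ps"
  have bij: "bij_betw \<theta> S S" and cycS: "\<forall>x\<in>S. \<forall>y\<in>S. \<exists>n. (\<theta> ^^ n) x = y"
    using cyc by (auto simp: single_cycle_on_def S_def)
  have th: "\<theta> ` (F0 \<union> F1) \<subseteq> F0 \<union> F1" using bij by (simp add: S_def bij_betw_def)
  have thi: "inj_on \<theta> (F0 \<union> F1)" using bij by (simp add: S_def bij_betw_def)
  have "p \<in> set ps" using lin by (simp add: linear_extension_def)
  then obtain xs ys where ps: "ps = xs @ p # ys" by (metis split_list)
  have dist: "distinct ps" and ord: "\<And>i j. i < length ps \<Longrightarrow> j < length ps \<Longrightarrow> ps ! i < ps ! j \<Longrightarrow> i < j"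
    using lin by (auto simp: linear_extension_def)
  have pnot: "p \<notin> set xs" "p \<notin> set ys" using dist ps by auto
  have below: "y \<notin> set ys" if "y < p" for y
  proof
    assume "y \<in> set ys"
    then obtain m where m: "m < length ys" "ys ! m = y" by (metis in_set_conv_nth)
    have "ps ! (length xs + Suc m) = y" "ps ! length xs = p" using m ps by (simp_all add: nth_append)
    then have "length xs + Suc m < length xs" using ord[of "length xs + Suc m" "length xs"] m ps that by simp
    then show False by simp
  qed
  have above: "y \<notin> set xs" if "p < y" for y
  proof
    assume "y \<in> set xs"
    then obtain m where m: "m < length xs" "xs ! m = y" by (metis in_set_conv_nth)
    have "ps ! m = y" "ps ! length xs = p" using m ps by (simp_all add: nth_append)
    then have "length xs < m" using ord[of "length xs" m] m ps that by simp
    then show False using m by simp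
  qed
  have rho: "\<rho> = qrowmotion F0 F1 \<theta> xs \<circ> toggle F0 F1 \<theta> p \<circ> qrowmotion F0 F1 \<theta> ys"
    unfolding \<rho>_def ps qrow_append qrow_Cons by (simp add: comp_assoc)
  define mv where "mv L' = active F0 F1 (qrowmotion F0 F1 \<theta> ys L') p" for L'
  have step: "tp p (L' -` F0) = (if mv L' \<and> L' p \<in> F1 then 1 else 0)
      \<and> tm p (\<rho> L' -` F0) = (if mv L' \<and> \<theta> (L' p) \<in> F0 then 1 else 0)
      \<and> \<rho> L' p = (if mv L' then \<theta> (L' p) else L' p)" if L': "L' \<in> labelings F0 F1" for L'
  proof -
    define M where "M = qrowmotion F0 F1 \<theta> ys L'"
    have M: "M \<in> labelings F0 F1" unfolding M_def by (rule qrow_lab[OF disj th L'])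
    have Mp: "M p = L' p" unfolding M_def by (rule qrow_other[OF pnot(2)])
    have Mlow: "M y = L' y" if "y < p" for y unfolding M_def by (rule qrow_other[OF below[OF that]])
    have R: "\<rho> L' = qrowmotion F0 F1 \<theta> xs (toggle F0 F1 \<theta> p M)" by (simp add: rho M_def)
    have Rp: "\<rho> L' p = toggle F0 F1 \<theta> p M p" unfolding R by (rule qrow_other[OF pnot(1)])
    have Rup: "\<rho> L' y = M y" if "p < y" for y
      unfolding R using qrow_other[OF above[OF that]] toggle_other that by (metis order.strict_implies_not_eq)
    have mvM: "mv L' = active F0 F1 M p" by (simp add: mv_def M_def)
    have c: "\<rho> L' p = (if mv L' then \<theta> (L' p) else L' p)"
      using Rp Mp mvM by (simp add: toggle_def)
    have a: "tp p (L' -` F0) = (if mv L' \<and> L' p \<in> F1 then 1 else 0)"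
    proof -
      have "(L' p \<notin> F0 \<and> (\<forall>y. y < p \<longrightarrow> L' y \<in> F0)) = (active F0 F1 M p \<and> L' p \<in> F1)"
      proof
        assume h: "L' p \<notin> F0 \<and> (\<forall>y. y < p \<longrightarrow> L' y \<in> F0)"
        then have "L' p \<in> F1" using labD[OF L', of p] by auto
        moreover have "\<forall>y. y < p \<longrightarrow> M y \<notin> F1" using h Mlow disj by auto
        ultimately show "active F0 F1 M p \<and> L' p \<in> F1" using Mp by (simp add: active_def)
      next
        assume h: "active F0 F1 M p \<and> L' p \<in> F1"
        then have low: "\<forall>y. y < p \<longrightarrow> M y \<notin> F1" using Mp disj by (auto simp: active_def)
        have "\<forall>y. y < p \<longrightarrow> L' y \<in> F0"
        proof (intro allI impI)
          fix y assume "y < p"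
          then show "L' y \<in> F0" using low Mlow labD[OF L', of y] by auto
        qed
        then show "L' p \<notin> F0 \<and> (\<forall>y. y < p \<longrightarrow> L' y \<in> F0)" using h disj by auto
      qed
      then show ?thesis unfolding tp_def mvM by simp
    qed
    have b: "tm p (\<rho> L' -` F0) = (if mv L' \<and> \<theta> (L' p) \<in> F0 then 1 else 0)"
    proof -
      have "(\<rho> L' p \<in> F0 \<and> (\<forall>y. p < y \<longrightarrow> \<rho> L' y \<notin> F0)) = (active F0 F1 M p \<and> \<theta> (M p) \<in> F0)"
      proof
        assume h: "\<rho> L' p \<in> F0 \<and> (\<forall>y. p < y \<longrightarrow> \<rho> L' y \<notin> F0)"
        then have up: "\<forall>y. p < y \<longrightarrow> M y \<notin> F0" using Rup by auto
        show "active F0 F1 M p \<and> \<theta> (M p) \<in> F0"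
        proof (cases "active F0 F1 M p")
          case True then show ?thesis using h Rp by (simp add: toggle_def)
        next
          case False
          then have "M p \<in> F0" using h Rp by (simp add: toggle_def)
          then have "active F0 F1 M p" using up by (simp add: active_def)
          then show ?thesis using False by simp
        qed
      next
        assume h: "active F0 F1 M p \<and> \<theta> (M p) \<in> F0"
        have up: "\<forall>y. p < y \<longrightarrow> M y \<notin> F0"
        proof (cases "M p \<in> F0")
          case True then show ?thesis using h disj by (auto simp: active_def)
        next
          case False then show ?thesis using lab_ideal[OF M] by (meson less_imp_le)
        qed
        show "\<rho> L' p \<in> F0 \<and> (\<forall>y. p < y \<longrightarrow> \<rho> L' y \<notin> F0)"
          using h Rp Rup up by (simp add: toggle_def)
      qed
      then show ?thesis unfolding tm_def mvM Mp[symmetric] by simp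
    qed
    show ?thesis using a b c by blast
  qed
  define g where "g y = real s * (if y \<in> F1 then 1 else 0) - real r * (if \<theta> y \<in> F0 then 1 else 0)" for y
  have finS: "finite S" using finF0 finF1 by (simp add: S_def)
  have sum0: "(\<Sum>y\<in>S. g y) = 0"
  proof -
    have s1: "(\<Sum>y\<in>S. real s * (if y \<in> F1 then 1 else 0)) = real s * real r"
    proof -
      have "(\<Sum>y\<in>S. real s * (if y \<in> F1 then 1 else 0)) = (\<Sum>y\<in>S. if y \<in> F1 then real s else 0)"
        by (rule sum.cong) auto
      also have "\<dots> = (\<Sum>y\<in>{y\<in>S. y \<in> F1}. real s)" by (rule sum.inter_filter[OF finS, symmetric])
      also have "{y\<in>S. y \<in> F1} = F1" by (auto simp: S_def)
      finally show ?thesis using cF1 by simp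
    qed
    have s2: "(\<Sum>y\<in>S. real r * (if \<theta> y \<in> F0 then 1 else 0)) = real r * real s"
    proof -
      have "(\<Sum>y\<in>S. real r * (if \<theta> y \<in> F0 then 1 else 0)) = (\<Sum>y\<in>S. (\<lambda>z. if z \<in> F0 then real r else 0) (\<theta> y))"
        by (rule sum.cong) auto
      also have "\<dots> = (\<Sum>z\<in>S. if z \<in> F0 then real r else 0)" by (rule sum.reindex_bij_betw[OF bij])
      also have "\<dots> = (\<Sum>y\<in>{y\<in>S. y \<in> F0}. real r)" by (rule sum.inter_filter[OF finS, symmetric])
      also have "{y\<in>S. y \<in> F0} = F0" by (auto simp: S_def)
      finally show ?thesis using cF0 by simp
    qed
    show ?thesis unfolding g_def sum_subtractf s1 s2 by simp
  qed
  obtain \<phi> :: "'b \<Rightarrow> real" where phi: "\<forall>y\<in>S. \<phi> (\<theta> y) - \<phi> y = g y"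
    using potential[OF finS bij cycS sum0] by blast
  have rmaps: "\<forall>y\<in>labelings F0 F1. \<rho> y \<in> labelings F0 F1"
    unfolding \<rho>_def using qrow_lab[OF disj th] by blast
  define Lk where "Lk k = (\<rho> ^^ k) L" for k
  have LkX: "Lk k \<in> labelings F0 F1" for k unfolding Lk_def by (rule funpow_in[OF L rmaps])
  have LkS: "Lk (Suc k) = \<rho> (Lk k)" for k by (simp add: Lk_def)
  have tele: "\<phi> (Lk (Suc k) p) - \<phi> (Lk k p) = real s * tp p (Lk k -` F0) - real r * tm p (Lk (Suc k) -` F0)" for k
  proof -
    have st: "tp p (Lk k -` F0) = (if mv (Lk k) \<and> Lk k p \<in> F1 then 1 else 0)"
       "tm p (\<rho> (Lk k) -` F0) = (if mv (Lk k) \<and> \<theta> (Lk k p) \<in> F0 then 1 else 0)"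
       "\<rho> (Lk k) p = (if mv (Lk k) then \<theta> (Lk k p) else Lk k p)"
      using step[OF LkX[of k]] by auto
    have inS: "Lk k p \<in> S" using labD[OF LkX[of k]] by (simp add: S_def)
    show ?thesis
    proof (cases "mv (Lk k)")
      case True
      then show ?thesis using st phi inS unfolding LkS by (simp add: g_def)
    next
      case False
      then show ?thesis using st unfolding LkS by simp
    qed
  qed
  have "(\<Sum>k<N. \<phi> (Lk (Suc k) p) - \<phi> (Lk k p)) = \<phi> (Lk N p) - \<phi> (Lk 0 p)"
    by (rule sum_lessThan_telescope)
  also have "\<dots> = 0" using per by (simp add: Lk_def \<rho>_def)
  finally have "(\<Sum>k<N. real s * tp p (Lk k -` F0) - real r * tm p (Lk (Suc k) -` F0)) = 0"
    using tele by simp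
  then have e1: "(\<Sum>k<N. real s * tp p (Lk k -` F0)) = (\<Sum>k<N. real r * tm p (Lk (Suc k) -` F0))"
    by (simp add: sum_subtractf)
  have e2: "(\<Sum>k<N. real r * tm p (Lk (Suc k) -` F0)) = (\<Sum>k<N. real r * tm p (Lk k -` F0))"
  proof -
    have "(\<Sum>k<Suc N. real r * tm p (Lk k -` F0)) = real r * tm p (Lk 0 -` F0) + (\<Sum>k<N. real r * tm p (Lk (Suc k) -` F0))"
      by (rule sum.lessThan_Suc_shift)
    moreover have "(\<Sum>k<Suc N. real r * tm p (Lk k -` F0)) = (\<Sum>k<N. real r * tm p (Lk k -` F0)) + real r * tm p (Lk N -` F0)"
      by simp
    moreover have "Lk N = Lk 0" using per by (simp add: Lk_def \<rho>_def)
    ultimately show ?thesis by simp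
  qed
  show ?thesis using e1 e2 unfolding Lk_def \<rho>_def by simp
qed



lemma labelings_finite:
  assumes "finite F0" "finite F1"
  shows "finite (labelings F0 F1 :: ('a::{finite,order} \<Rightarrow> 'b) set)"
proof -
  have "finite (Pi\<^sub>E (UNIV::'a set) (\<lambda>_. F0 \<union> F1))" using assms by (intro finite_PiE) auto
  then have "finite (Pi (UNIV::'a set) (\<lambda>_. F0 \<union> F1))" by (simp add: PiE_UNIV_domain)
  moreover have "labelings F0 F1 \<subseteq> Pi (UNIV::'a set) (\<lambda>_. F0 \<union> F1)"
    by (auto simp: labelings_def)
  ultimately show ?thesis by (rule finite_subset[rotated])
qed

theorem proposition5p7:
  fixes f :: "'a::{finite,order} set \<Rightarrow> real"
    and c :: "real poly fract"
    and r s :: nat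
    and F0 F1 :: "'b set"
    and \<theta> :: "'b \<Rightarrow> 'b"
    and ps :: "'a list"
  assumes "q_equiv (\<lambda>I. const_fract (f I)) (\<lambda>_. c)"
    and "0 < r" and "0 < s"
    and "finite F0" and "finite F1" and "F0 \<inter> F1 = {}"
    and "card F0 = s" and "card F1 = r"
    and "single_cycle_on \<theta> (F0 \<union> F1)"
    and "linear_extension ps"
    and "fract_defined_at c (real r / real s)"
  shows "mesic (qrowmotion F0 F1 \<theta> ps) (labelings F0 F1) (\<lambda>L. f (L -` F0))
           (fract_eval c (real r / real s))"
proof -
  note qe = assms(1) and r0 = assms(2) and s0 = assms(3) and finF0 = assms(4) and finF1 = assms(5)
    and disj = assms(6) and cF0 = assms(7) and cF1 = assms(8) and cyc = assms(9) and lin = assms(10)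
    and def = assms(11)
  define q0 where "q0 = real r / real s"
  have q0pos: "q0 > 0" using r0 s0 by (simp add: q0_def)
  have sq0: "real s * q0 = real r" using s0 by (simp add: q0_def)
  obtain \<alpha> \<beta> where cab: "c = Fract \<alpha> \<beta>" and b0: "poly \<beta> q0 \<noteq> 0"
    using def by (auto simp: fract_defined_at_def q0_def)
  have bne: "\<beta> \<noteq> 0" using b0 by auto
  obtain D U where D: "D \<noteq> 0" and DU: "\<forall>I\<in>order_ideals. D * (\<beta> * [:f I:] - \<alpha>) = (\<Sum>p\<in>UNIV. U p * qp p I)"
    using to_poly[OF qe cab bne] by blast
  obtain D' U' where D': "poly D' q0 \<noteq> 0"
    and DU': "\<forall>I\<in>order_ideals. D' * (\<beta> * [:f I:] - \<alpha>) = (\<Sum>p\<in>UNIV. U' p * qp p I)"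
    using reduce[OF q0pos D DU] by blast
  have ev: "poly D' q0 * (poly \<beta> q0 * f I - poly \<alpha> q0) = (\<Sum>p\<in>UNIV. poly (U' p) q0 * (tp p I - q0 * tm p I))"
    if "I \<in> order_ideals" for I
  proof -
    have "poly (D' * (\<beta> * [:f I:] - \<alpha>)) q0 = poly (\<Sum>p\<in>UNIV. U' p * qp p I) q0" using DU' that by simp
    then show ?thesis by (simp add: poly_sum poly_qp algebra_simps)
  qed
  have bij: "bij_betw \<theta> (F0 \<union> F1) (F0 \<union> F1)" using cyc by (simp add: single_cycle_on_def)
  have th: "\<theta> ` (F0 \<union> F1) \<subseteq> F0 \<union> F1" using bij by (simp add: bij_betw_def)
  have thi: "inj_on \<theta> (F0 \<union> F1)" using bij by (simp add: bij_betw_def)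
  define \<rho> where "\<rho> = qrowmotion F0 F1 \<theta> ps"
  have rmaps: "\<forall>y\<in>labelings F0 F1. \<rho> y \<in> labelings F0 F1"
    unfolding \<rho>_def using qrow_lab[OF disj th] by blast
  have rinj: "inj_on \<rho> (labelings F0 F1)" unfolding \<rho>_def by (rule qrow_inj[OF disj th thi])
  have finX: "finite (labelings F0 F1 :: ('a \<Rightarrow> 'b) set)" by (rule labelings_finite[OF finF0 finF1])
  show ?thesis
    unfolding mesic_def \<rho>_def[symmetric] q0_def[symmetric]
  proof
    fix L :: "'a \<Rightarrow> 'b" assume L: "L \<in> labelings F0 F1"
    obtain N where N: "0 < N" "(\<rho> ^^ N) L = L" and bN: "bij_betw (\<lambda>k. (\<rho> ^^ k) L) {..<N} (orbit_of \<rho> L)"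
      using periodic[OF finX rmaps rinj L] by blast
    define I where "I k = (\<rho> ^^ k) L -` F0" for k
    have IJ: "I k \<in> order_ideals" for k
      using funpow_in[OF L rmaps, of k] by (simp add: I_def labelings_def)
    have sumorb: "(\<Sum>y\<in>orbit_of \<rho> L. f (y -` F0)) = (\<Sum>k<N. f (I k))"
      using sum.reindex_bij_betw[OF bN, of "\<lambda>y. f (y -` F0)"] by (simp add: I_def)
    have cardorb: "card (orbit_of \<rho> L) = N" using bij_betw_same_card[OF bN] by simp
    have cnt: "(\<Sum>k<N. tp p (I k) - q0 * tm p (I k)) = 0" for p
    proof -
      have "(\<Sum>k<N. real s * tp p (I k)) = (\<Sum>k<N. real r * tm p (I k))"
        using count[OF disj finF0 finF1 cF0 cF1 cyc lin L N(2)[unfolded \<rho>_def], of p]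
        by (simp add: I_def \<rho>_def)
      then have "real s * (\<Sum>k<N. tp p (I k)) = real s * (q0 * (\<Sum>k<N. tm p (I k)))"
        by (simp add: sum_distrib_left sq0 mult.assoc[symmetric])
      then have "(\<Sum>k<N. tp p (I k)) = q0 * (\<Sum>k<N. tm p (I k))" using s0 by simp
      then show ?thesis by (simp add: sum_subtractf sum_distrib_left)
    qed
    have "(\<Sum>k<N. poly D' q0 * (poly \<beta> q0 * f (I k) - poly \<alpha> q0))
        = (\<Sum>k<N. \<Sum>p\<in>UNIV. poly (U' p) q0 * (tp p (I k) - q0 * tm p (I k)))"
      using ev IJ by simp
    also have "\<dots> = (\<Sum>p\<in>UNIV. poly (U' p) q0 * (\<Sum>k<N. tp p (I k) - q0 * tm p (I k)))"
      by (simp add: sum.swap[of _ "{..<N}"] sum_distrib_left)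
    also have "\<dots> = 0" using cnt by simp
    finally have "poly D' q0 * (poly \<beta> q0 * (\<Sum>k<N. f (I k)) - real N * poly \<alpha> q0) = 0"
      by (simp add: sum_distrib_left sum_subtractf algebra_simps)
    then have "poly \<beta> q0 * (\<Sum>k<N. f (I k)) = real N * poly \<alpha> q0" using D' by simp
    then have "(\<Sum>k<N. f (I k)) / real N = poly \<alpha> q0 / poly \<beta> q0"
      using N(1) b0 by (simp add: field_simps)
    then show "(\<Sum>y\<in>orbit_of \<rho> L. f (y -` F0)) / real (card (orbit_of \<rho> L)) = fract_eval c q0"
      using sumorb cardorb fract_eval_eq[OF cab b0] by simp
  qed
qed

end
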